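(* Let $S$ be a semigroup. Every proper interior ideal of $S$ is minimal if and only if any two distinct proper interior ideals of $S$ have empty intersection.
   Context: A subsemigroup $I$ of $S$ (non-empty with $II\subseteq I$) is an interior ideal if $SIS\subseteq I$; it is proper if $I\neq S$. An interior ideal $I$ is minimal if the only interior ideal of $S$ contained in $I$ is $I$ itself. *)

theory Defs
  imports Main
begin

text \<open>The semigroup S is the universe of a type of class semigroup_mult.\<close>

definition interior_ideal :: "'a::semigroup_mult set \<Rightarrow> bool" where
  "interior_ideal I \<longleftrightarrow> I \<noteq> {}
     \<and> (\<forall>a\<in>I. \<forall>b\<in>I. a * b \<in> I)
     \<and> (\<forall>s t a. a \<in> I \<longrightarrow> s * a * t \<in> I)"

definition proper_interior_ideal :: "'a::semigroup_mult set \<Rightarrow> bool" where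
  "proper_interior_ideal I \<longleftrightarrow> interior_ideal I \<and> I \<noteq> UNIV"

definition minimal_interior_ideal :: "'a::semigroup_mult set \<Rightarrow> bool" where
  "minimal_interior_ideal I \<longleftrightarrow> interior_ideal I
     \<and> (\<forall>J. interior_ideal J \<and> J \<subseteq> I \<longrightarrow> J = I)"

end

theory Submission
  imports Defs
begin

lemma int_ii:
  assumes "interior_ideal (I::'a::semigroup_mult set)" "interior_ideal J" "I \<inter> J \<noteq> {}"
  shows "interior_ideal (I \<inter> J)"
  using assms unfolding interior_ideal_def by blast

theorem mainTheorem15:
  shows "(\<forall>I::'a::semigroup_mult set. proper_interior_ideal I \<longrightarrow> minimal_interior_ideal I)
    \<longleftrightarrow> (\<forall>I J::'a set. proper_interior_ideal I \<and> proper_interior_ideal J \<and> I \<noteq> J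
           \<longrightarrow> I \<inter> J = {})"
proof
  assume H: "\<forall>I::'a set. proper_interior_ideal I \<longrightarrow> minimal_interior_ideal I"
  show "\<forall>I J::'a set. proper_interior_ideal I \<and> proper_interior_ideal J \<and> I \<noteq> J
           \<longrightarrow> I \<inter> J = {}"
  proof (intro allI impI, rule ccontr)
    fix I J :: "'a set"
    assume a: "proper_interior_ideal I \<and> proper_interior_ideal J \<and> I \<noteq> J" and n: "I \<inter> J \<noteq> {}"
    have ii: "interior_ideal (I \<inter> J)" using a n int_ii proper_interior_ideal_def by blast
    have "I \<inter> J = I" using H a ii unfolding minimal_interior_ideal_def by blast
    moreover have "I \<inter> J = J" using H a ii unfolding minimal_interior_ideal_def by blast
    ultimately show False using a by blast
  qed
next
  assume H: "\<forall>I J::'a set. proper_interior_ideal I \<and> proper_interior_ideal J \<and> I \<noteq> J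
           \<longrightarrow> I \<inter> J = {}"
  show "\<forall>I::'a set. proper_interior_ideal I \<longrightarrow> minimal_interior_ideal I"
  proof (intro allI impI)
    fix I :: "'a set"
    assume a: "proper_interior_ideal I"
    show "minimal_interior_ideal I"
      unfolding minimal_interior_ideal_def
    proof (intro conjI allI impI)
      show "interior_ideal I" using a proper_interior_ideal_def by blast
      fix J :: "'a set"
      assume j: "interior_ideal J \<and> J \<subseteq> I"
      then have pj: "proper_interior_ideal J" using a unfolding proper_interior_ideal_def by blast
      have "J \<noteq> {}" using j interior_ideal_def by blast
      then show "J = I" using H a pj j by blast
    qed
  qed
qed

end
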